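(* For each even integer $L\ge 2$ there is an irrational number $x=[a_0,a_1,a_2,\ldots]$ with all $a_i\in\{1,2,3,4\}$ and eventually periodic sequence of partial quotients, such that its Jacobi sequence is eventually periodic with repeating block $1,1,\ldots,1,-1$ of length $L$ (the value $1$ repeated $L-1$ times followed by $-1$). Furthermore, there are uncountably many distinct Jacobi sequences that are not eventually periodic and that are Jacobi sequences of irrational numbers $x=[a_0,a_1,a_2,\ldots]$ with all $a_i\in\{1,2,3,4\}$.
   Context: For $x\in\mathbb{R}\setminus\mathbb{Q}$ with regular continued fraction expansion $x=[a_0,a_1,a_2,\ldots]$, the convergents $s_k/t_k$ are defined by $s_{-1}=1$, $s_0=a_0$, $s_k=a_ks_{k-1}+s_{k-2}$ and $t_{-1}=0$, $t_0=1$, $t_k=a_kt_{k-1}+t_{k-2}$ for $k\ge1$. For an odd natural number $n$ and an integer $m$ coprime to $n$, $\left(\frac{m}{n}\right)$ is the usual Jacobi symbol (equal to $1$ if $n=1$); if $n$ is even and $\gcd(m,n)=1$, one sets $\left(\frac{m}{n}\right)=*$, a fixed symbol different from $\pm1$. The Jacobi sequence of $x$ is $\left(\frac{s_k}{t_k}\right)$, $k\ge 0$. *)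

theory Defs
  imports Complex_Main "HOL-Number_Theory.Number_Theory" "HOL-Library.Countable_Set"
begin

fun cf_rem :: "real \<Rightarrow> nat \<Rightarrow> real" where
  "cf_rem x 0 = x"
| "cf_rem x (Suc k) = 1 / (cf_rem x k - of_int \<lfloor>cf_rem x k\<rfloor>)"

definition cf_digit :: "real \<Rightarrow> nat \<Rightarrow> int" where
  "cf_digit x k = \<lfloor>cf_rem x k\<rfloor>"

fun cf_num :: "(nat \<Rightarrow> int) \<Rightarrow> nat \<Rightarrow> int" where
  "cf_num a 0 = a 0"
| "cf_num a (Suc 0) = a 1 * a 0 + 1"
| "cf_num a (Suc (Suc k)) = a (Suc (Suc k)) * cf_num a (Suc k) + cf_num a k"

fun cf_den :: "(nat \<Rightarrow> int) \<Rightarrow> nat \<Rightarrow> int" where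
  "cf_den a 0 = 1"
| "cf_den a (Suc 0) = a 1"
| "cf_den a (Suc (Suc k)) = a (Suc (Suc k)) * cf_den a (Suc k) + cf_den a k"

definition jacobi :: "int \<Rightarrow> int \<Rightarrow> int" where
  "jacobi m n = (\<Prod>p\<in>prime_factors n. Legendre m p ^ multiplicity p n)"

(* Jacobi sequence: Some (m/n) if n is odd, None represents the symbol * (n even) *)
definition jacobi_seq :: "real \<Rightarrow> nat \<Rightarrow> int option" where
  "jacobi_seq x k =
     (let s = cf_num (cf_digit x) k; t = cf_den (cf_digit x) k in
      if odd t then Some (jacobi s t) else None)"

definition eventually_periodic :: "(nat \<Rightarrow> 'a) \<Rightarrow> bool" where
  "eventually_periodic f \<longleftrightarrow> (\<exists>N P. P > 0 \<and> (\<forall>k\<ge>N. f (k + P) = f k))"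

end

theory Submission
  imports Defs
begin

lemma jacobi_mset: "jacobi m n = prod_mset (image_mset (\<lambda>p. Legendre m p) (prime_factorization n))"
  unfolding jacobi_def image_prod_mset_multiplicity
  by (intro prod.cong) (auto simp: count_prime_factorization_prime in_prime_factors_imp_prime)

lemma jacobi_mult_den: "x \<noteq> 0 \<Longrightarrow> y \<noteq> 0 \<Longrightarrow> jacobi m (x*y) = jacobi m x * jacobi m y"
  by (simp add: jacobi_mset prime_factorization_mult)

lemma jacobi_prime: "prime (p::int) \<Longrightarrow> jacobi m p = Legendre m p"
  by (simp add: jacobi_mset prime_factorization_prime)

lemma jacobi_one [simp]: "jacobi m 1 = 1"
  by (simp add: jacobi_def)

lemma Legendre_cong: "[a = b] (mod p) \<Longrightarrow> Legendre a p = Legendre b p"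
proof -
  assume h: "[a = b] (mod p)"
  have "[a = 0] (mod p) \<longleftrightarrow> [b = 0] (mod p)" using h by (meson cong_sym cong_trans)
  moreover have "QuadRes p a \<longleftrightarrow> QuadRes p b" unfolding QuadRes_def using h by (meson cong_sym cong_trans)
  ultimately show ?thesis by (simp add: Legendre_def)
qed

lemma jacobi_cong: "[a = b] (mod n) \<Longrightarrow> jacobi a n = jacobi b n"
proof -
  assume h: "[a = b] (mod n)"
  show ?thesis unfolding jacobi_def
  proof (rule prod.cong[OF refl])
    fix p assume "p \<in> prime_factors n"
    hence "p dvd n" by (simp add: in_prime_factors_imp_dvd)
    hence "[a = b] (mod p)" using h cong_dvd_modulus by blast
    thus "Legendre a p ^ multiplicity p n = Legendre b p ^ multiplicity p n"
      by (simp add: Legendre_cong)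
  qed
qed

lemma Legendre_vals: "Legendre a p \<in> {-1,0,1}"
  by (auto simp: Legendre_def)

lemma small_cong_eq:
  fixes x y p :: int
  assumes "x \<in> {-1,0,1}" "y \<in> {-1,0,1}" "[x = y] (mod p)" "p > 2"
  shows "x = y"
proof (rule ccontr)
  assume "x \<noteq> y"
  have "p dvd (x - y)" using assms(3) by (simp add: cong_iff_dvd_diff)
  hence "\<bar>p\<bar> \<le> \<bar>x - y\<bar>" using \<open>x \<noteq> y\<close> by (intro dvd_imp_le_int) auto
  moreover have "\<bar>x - y\<bar> \<le> 2" using assms(1,2) by auto
  ultimately show False using assms(4) by linarith
qed

lemma euler_int:
  assumes "prime (p::int)" "p > 2"
  shows "[Legendre a p = a ^ (nat ((p - 1) div 2))] (mod p)"
proof -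
  have pp: "prime (nat p)" using assms by simp
  have "int (nat p) = p" using assms by simp
  moreover have "(nat p - 1) div 2 = nat ((p - 1) div 2)" using assms by linarith
  ultimately show ?thesis using euler_criterion[OF pp, of a] assms by auto
qed

lemma Legendre_mult:
  assumes "prime (p::int)" "p > 2"
  shows "Legendre (a*b) p = Legendre a p * Legendre b p"
proof (rule small_cong_eq[OF Legendre_vals _ _ assms(2)])
  show "Legendre a p * Legendre b p \<in> {-1,0,1}" using Legendre_vals[of a p] Legendre_vals[of b p] by auto
  have "[Legendre (a*b) p = (a*b) ^ (nat ((p - 1) div 2))] (mod p)" by (rule euler_int[OF assms])
  moreover have "[a ^ (nat ((p - 1) div 2)) * b ^ (nat ((p - 1) div 2)) = Legendre a p * Legendre b p] (mod p)"
    using euler_int[OF assms, of a] euler_int[OF assms, of b] by (intro cong_mult) (auto simp: cong_sym)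
  moreover have "(a*b) ^ (nat ((p - 1) div 2)) = a ^ (nat ((p - 1) div 2)) * b ^ (nat ((p - 1) div 2))"
    by (simp add: power_mult_distrib)
  ultimately show "[Legendre (a*b) p = Legendre a p * Legendre b p] (mod p)"
    using cong_trans by metis
qed

lemma Legendre_neg1:
  assumes "prime (p::int)" "p > 2"
  shows "Legendre (-1) p = (if p mod 4 = 1 then 1 else -1)"
proof (rule small_cong_eq[OF Legendre_vals _ _ assms(2)])
  show "(if p mod 4 = 1 then 1 else -1) \<in> {-1,0,1::int}" by auto
  have "odd p" using assms by (metis prime_odd_int)
  have "(-1::int) ^ (nat ((p - 1) div 2)) = (if p mod 4 = 1 then 1 else -1)"
  proof -
    have "even (nat ((p - 1) div 2)) \<longleftrightarrow> p mod 4 = 1"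
      using \<open>odd p\<close> assms by (simp add: even_nat_iff) presburger
    thus ?thesis by (simp add: minus_one_power_iff)
  qed
  thus "[Legendre (-1) p = (if p mod 4 = 1 then 1 else -1)] (mod p)"
    using euler_int[OF assms, of "-1"] by simp
qed

lemma Legendre_one: "prime (p::int) \<Longrightarrow> Legendre 1 p = 1"
  unfolding Legendre_def QuadRes_def
  by (auto simp: cong_def) (metis one_power2)


lemma jacobi_one_num [simp]: "jacobi 1 n = 1"
  unfolding jacobi_def by (intro prod.neutral) (simp add: Legendre_one in_prime_factors_imp_prime)

lemma odd_pos_induct [consumes 2, case_names one step]:
  assumes "(n::int) > 0" "odd n" "P 1"
    "\<And>p x. prime p \<Longrightarrow> p > 2 \<Longrightarrow> x > 0 \<Longrightarrow> odd x \<Longrightarrow> P x \<Longrightarrow> P (p*x)"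
  shows "P n"
proof -
  have "n > 0 \<longrightarrow> odd n \<longrightarrow> P n"
  proof (induction n rule: prime_divisors_induct)
    case zero then show ?case by simp
  next
    case (unit x)
    then have "x = 1 \<or> x = -1" by auto
    then show ?case using assms(3) by auto
  next
    case (factor p x)
    show ?case
    proof (intro impI)
      assume h: "p * x > 0" "odd (p*x)"
      have "p > 0" using factor(1) by (simp add: prime_gt_0_int)
      hence "x > 0" using h(1) by (simp add: zero_less_mult_iff)
      have "odd x" "odd p" using h(2) by auto
      have "p \<ge> 2" using factor(1) by (simp add: prime_ge_2_int)
      hence "p > 2" using \<open>odd p\<close> by (cases "p = 2") auto
      show "P (p*x)" using assms(4)[OF factor(1) \<open>p > 2\<close> \<open>x > 0\<close> \<open>odd x\<close>] factor(2) \<open>x > 0\<close> \<open>odd x\<close> by blast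
    qed
  qed
  thus ?thesis using assms by blast
qed

lemma jacobi_pfx: "prime (p::int) \<Longrightarrow> x \<noteq> 0 \<Longrightarrow> jacobi m (p*x) = Legendre m p * jacobi m x"
  by (subst jacobi_mult_den) (auto simp: jacobi_prime)

lemma jacobi_mult_num:
  assumes "(n::int) > 0" "odd n"
  shows "jacobi (a*b) n = jacobi a n * jacobi b n"
  using assms
proof (induction n rule: odd_pos_induct)
  case one then show ?case by simp
next
  case (step p x)
  have "x \<noteq> 0" using step by simp
  have "jacobi (a*b) (p*x) = Legendre (a*b) p * jacobi (a*b) x" by (rule jacobi_pfx[OF step(1) \<open>x \<noteq> 0\<close>])
  also have "\<dots> = (Legendre a p * Legendre b p) * (jacobi a x * jacobi b x)"
    using Legendre_mult[OF step(1,2)] step.IH by simp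
  also have "\<dots> = (Legendre a p * jacobi a x) * (Legendre b p * jacobi b x)" by (simp add: ac_simps)
  also have "\<dots> = jacobi a (p*x) * jacobi b (p*x)" using jacobi_pfx[OF step(1) \<open>x \<noteq> 0\<close>] by simp
  finally show ?case .
qed

lemma Legendre_unit:
  assumes "prime (p::int)" "coprime a p"
  shows "Legendre a p = 1 \<or> Legendre a p = -1"
proof -
  have "\<not> p dvd a"
  proof
    assume "p dvd a"
    hence "is_unit p" using coprime_common_divisor[OF assms(2) \<open>p dvd a\<close> dvd_refl] by blast
    thus False using assms(1) not_prime_unit by blast
  qed
  hence "\<not> [a = 0] (mod p)" by (simp add: cong_0_iff)
  thus ?thesis by (auto simp: Legendre_def)
qed

lemma jacobi_unit:
  assumes "(n::int) > 0" "odd n" "coprime a n"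
  shows "jacobi a n = 1 \<or> jacobi a n = -1"
  using assms
proof (induction n rule: odd_pos_induct)
  case one then show ?case by simp
next
  case (step p x)
  have "coprime a p" "coprime a x" using step.prems by auto
  then have "Legendre a p = 1 \<or> Legendre a p = -1" using Legendre_unit step(1) by blast
  moreover have "jacobi a x = 1 \<or> jacobi a x = -1" using step.IH \<open>coprime a x\<close> by blast
  ultimately show ?case using step by (auto simp: jacobi_pfx)
qed

definition chi4 :: "int \<Rightarrow> int" where "chi4 n = (if n mod 4 = 1 then 1 else -1)"

lemma mod4_odd: "odd (n::int) \<Longrightarrow> n mod 4 = 1 \<or> n mod 4 = 3"
  by presburger

lemma mod4_mult: 
  assumes "odd (p::int)" "odd x"
  shows "(p*x) mod 4 = 1 \<longleftrightarrow> (p mod 4 = 1 \<longleftrightarrow> x mod 4 = 1)"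
proof -
  have e: "(p*x) mod 4 = ((p mod 4) * (x mod 4)) mod 4" by (simp add: mod_mult_eq)
  from mod4_odd[OF assms(1)] mod4_odd[OF assms(2)] show ?thesis
    by (auto simp: e)
qed

lemma chi4_mult: "odd (p::int) \<Longrightarrow> odd x \<Longrightarrow> chi4 (p*x) = chi4 p * chi4 x"
  using mod4_mult[of p x] by (auto simp: chi4_def)

lemma jacobi_neg1:
  assumes "(n::int) > 0" "odd n"
  shows "jacobi (-1) n = chi4 n"
  using assms
proof (induction n rule: odd_pos_induct)
  case one then show ?case by (simp add: chi4_def)
next
  case (step p x)
  have "odd p" using step(1,2) by (metis prime_odd_int)
  have "Legendre (-1) p = chi4 p" using step Legendre_neg1 by (simp add: chi4_def)
  then show ?case using step by (simp add: jacobi_pfx chi4_mult[OF \<open>odd p\<close>])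
qed

definition sig :: "int \<Rightarrow> int \<Rightarrow> int" where
  "sig m n = (if chi4 m = -1 \<and> chi4 n = -1 then -1 else 1)"

lemma chi4_vals: "chi4 n = 1 \<or> chi4 n = -1"
  by (simp add: chi4_def)

lemma sig_mult2: "odd (p::int) \<Longrightarrow> odd x \<Longrightarrow> sig m (p*x) = sig m p * sig m x"
proof -
  assume "odd p" "odd x"
  hence c: "chi4 (p*x) = chi4 p * chi4 x" by (rule chi4_mult)
  show ?thesis using chi4_vals[of m] chi4_vals[of p] chi4_vals[of x] unfolding sig_def c
    by (elim disjE) simp_all
qed

lemma sig_sym: "sig m n = sig n m"
  by (auto simp: sig_def)

lemma QR_sig:
  assumes "prime (p::int)" "p > 2" "prime q" "q > 2" "p \<noteq> q"
  shows "Legendre p q * Legendre q p = sig p q"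
proof -
  have "odd p" "odd q" using assms by (metis prime_odd_int)+
  have L: "Legendre p q * Legendre q p = (-1::int) ^ (nat ((p - 1) div 2 * ((q - 1) div 2)))"
    by (rule Quadratic_Reciprocity_int) (use assms in simp_all)
  have "(p - 1) div 2 * ((q - 1) div 2) \<ge> 0" using assms by simp
  hence "even (nat ((p - 1) div 2 * ((q - 1) div 2))) \<longleftrightarrow> even ((p - 1) div 2 * ((q - 1) div 2))"
    by (simp add: even_nat_iff)
  also have "\<dots> \<longleftrightarrow> even ((p - 1) div 2) \<or> even ((q - 1) div 2)" by simp
  also have "even ((p - 1) div 2) \<longleftrightarrow> chi4 p = 1" using \<open>odd p\<close> unfolding chi4_def by presburger
  also have "even ((q - 1) div 2) \<longleftrightarrow> chi4 q = 1" using \<open>odd q\<close> unfolding chi4_def by presburger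
  finally have E: "even (nat ((p - 1) div 2 * ((q - 1) div 2))) \<longleftrightarrow> (chi4 p = 1 \<or> chi4 q = 1)" .
  show ?thesis unfolding L sig_def minus_one_power_iff E
    using chi4_vals[of p] chi4_vals[of q] by auto
qed

lemma recip_prime:
  assumes "prime (q::int)" "q > 2" "(n::int) > 0" "odd n" "coprime q n"
  shows "jacobi q n * jacobi n q = sig q n"
  using assms(3,4,5)
proof (induction n rule: odd_pos_induct)
  case one then show ?case
    using assms by (simp add: jacobi_prime Legendre_one sig_def chi4_def)
next
  case (step p x)
  have "coprime q p" "coprime q x" using step.prems by auto
  have "p \<noteq> q" using \<open>coprime q p\<close> assms(1) step(1) by (metis coprime_self not_prime_unit)
  have "odd q" "odd p" using assms step by (metis prime_odd_int)+
  have "jacobi q (p*x) * jacobi (p*x) q = (Legendre q p * Legendre p q) * (jacobi q x * jacobi x q)"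
    using step assms by (simp add: jacobi_pfx jacobi_prime Legendre_mult)
  also have "\<dots> = sig q p * sig q x" using step.IH[OF \<open>coprime q x\<close>] QR_sig[of q p] assms step \<open>p \<noteq> q\<close> by simp
  also have "\<dots> = sig q (p*x)" using sig_mult2 \<open>odd q\<close> \<open>odd p\<close> step by simp
  finally show ?case .
qed

lemma jacobi_recip:
  assumes "(m::int) > 0" "odd m" "(n::int) > 0" "odd n" "coprime m n"
  shows "jacobi m n * jacobi n m = sig m n"
  using assms(1,2,5)
proof (induction m rule: odd_pos_induct)
  case one then show ?case using assms by (simp add: sig_def chi4_def)
next
  case (step p x)
  have "coprime p n" "coprime x n" using step.prems by auto
  have "odd p" using step by (metis prime_odd_int)
  have "jacobi (p*x) n * jacobi n (p*x) = (jacobi p n * jacobi n p) * (jacobi x n * jacobi n x)"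
    using step assms by (simp add: jacobi_pfx jacobi_prime jacobi_mult_num)
  also have "\<dots> = sig p n * sig x n" using step.IH[OF \<open>coprime x n\<close>] recip_prime[of p n] assms step \<open>coprime p n\<close> by simp
  also have "\<dots> = sig n p * sig n x" by (simp add: sig_sym)
  also have "\<dots> = sig n (p*x)" using sig_mult2[of p x n] \<open>odd p\<close> step by simp
  also have "\<dots> = sig (p*x) n" by (rule sig_sym)
  finally show ?case .
qed


definition digs :: "nat set \<Rightarrow> nat \<Rightarrow> int" where
  "digs S k = (if k < 2 then 1 else if (k \<in> S) = (k - 2 \<in> S) then 4 else 2)"

definition okS :: "nat set \<Rightarrow> bool" where
  "okS S \<longleftrightarrow> (\<forall>k\<in>S. even k \<and> 0 < k)"

lemma okS_odd: "okS S \<Longrightarrow> odd k \<Longrightarrow> k \<notin> S"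
  unfolding okS_def by blast

lemma okS_0: "okS S \<Longrightarrow> 0 \<notin> S"
  unfolding okS_def by blast

lemma okS_consec: "okS S \<Longrightarrow> \<not> (k \<in> S \<and> Suc k \<in> S)"
proof
  assume "okS S" "k \<in> S \<and> Suc k \<in> S"
  then have "even k" "even (Suc k)" unfolding okS_def by blast+
  then show False by simp
qed

lemma cf_det: "cf_num a (Suc k) * cf_den a k - cf_num a k * cf_den a (Suc k) = (-1)^k"
proof (induction k)
  case 0 then show ?case by simp
next
  case (Suc k)
  have "cf_num a (Suc (Suc k)) * cf_den a (Suc k) - cf_num a (Suc k) * cf_den a (Suc (Suc k))
      = - (cf_num a (Suc k) * cf_den a k - cf_num a k * cf_den a (Suc k))"
    by (simp add: algebra_simps)
  then show ?case using Suc.IH by simp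
qed

lemma cf_den_pos:
  assumes "\<And>i. a i \<ge> 1"
  shows "cf_den a k \<ge> 1 \<and> cf_den a (Suc k) \<ge> 1"
proof (induction k)
  case 0 then show ?case using assms[of 1] by simp
next
  case (Suc k)
  have "a (Suc (Suc k)) * cf_den a (Suc k) \<ge> 1 * 1"
    using Suc.IH assms[of "Suc (Suc k)"] by (intro mult_mono) simp_all
  then show ?case using Suc.IH by simp
qed

lemma digs_ge1: "digs S i \<ge> 1"
  by (simp add: digs_def)

lemma digs_range: "digs S i \<in> {1..4}"
  by (simp add: digs_def)

lemma aux2: "(A::int) mod 4 = 1 \<or> A mod 4 = 3 \<Longrightarrow> B mod 4 = 1 \<or> B mod 4 = 3 \<Longrightarrow>
  (2*A + B) mod 4 = (if B mod 4 = 1 then 3 else 1)"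
  by presburger

lemma aux4: "(4*A + (B::int)) mod 4 = B mod 4"
  by presburger

lemma den_mod4:
  assumes "okS S"
  shows "cf_den (digs S) k mod 4 = (if k \<in> S then 3 else 1) \<and>
         cf_den (digs S) (Suc k) mod 4 = (if Suc k \<in> S then 3 else 1)"
proof (induction k)
  case 0
  have "0 \<notin> S" "1 \<notin> S" using okS_0[OF assms] okS_odd[OF assms, of 1] by auto
  then show ?case by (simp add: digs_def)
next
  case (Suc k)
  let ?t = "cf_den (digs S)"
  have notboth: "\<not> (Suc k \<in> S \<and> Suc (Suc k) \<in> S)" "\<not> (k \<in> S \<and> Suc k \<in> S)"
    using okS_consec[OF assms] by blast+
  have d: "digs S (Suc (Suc k)) = (if (Suc (Suc k) \<in> S) = (k \<in> S) then 4 else 2)"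
    by (simp add: digs_def)
  have e: "?t (Suc (Suc k)) = digs S (Suc (Suc k)) * ?t (Suc k) + ?t k" by simp
  have A: "?t (Suc k) mod 4 = 1 \<or> ?t (Suc k) mod 4 = 3" using Suc.IH by auto
  have B: "?t k mod 4 = 1 \<or> ?t k mod 4 = 3" using Suc.IH by auto
  have "?t (Suc (Suc k)) mod 4 = (if Suc (Suc k) \<in> S then 3 else 1)"
  proof (cases "(Suc (Suc k) \<in> S) = (k \<in> S)")
    case True
    then have "?t (Suc (Suc k)) mod 4 = ?t k mod 4" using e d aux4 by simp
    then show ?thesis using Suc.IH True by simp
  next
    case False
    then have "?t (Suc (Suc k)) mod 4 = (if ?t k mod 4 = 1 then 3 else 1)" using e d aux2[OF A B] by simp
    then show ?thesis using Suc.IH False by auto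
  qed
  then show ?case using Suc.IH by simp
qed

lemma det_coprime:
  assumes "s1 * t0 - s0 * t1 = (-1::int)^k"
  shows "coprime t0 t1"
proof (rule coprimeI)
  fix c assume "c dvd t0" "c dvd t1"
  hence "c dvd s1 * t0 - s0 * t1" by simp
  hence "c dvd (-1)^k" using assms by simp
  moreover have "is_unit ((-1::int)^k)" by simp
  ultimately show "is_unit c" by (rule dvd_unit_imp_unit)
qed

lemma jac_digs:
  assumes "okS S"
  shows "odd (cf_den (digs S) k) \<and>
         jacobi (cf_num (digs S) k) (cf_den (digs S) k) = (if k \<in> S then -1 else 1)"
proof -
  let ?a = "digs S"
  let ?s = "cf_num ?a" and ?t = "cf_den ?a"
  have pos: "?t k > 0" for k using cf_den_pos[of ?a k] digs_ge1[of S] by auto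
  have m4: "?t k mod 4 = (if k \<in> S then 3 else 1)" for k using den_mod4[OF assms, of k] by blast
  have odd: "odd (?t k)" for k
  proof -
    have "?t k mod 4 = 1 \<or> ?t k mod 4 = 3" using m4[of k] by auto
    then show ?thesis by presburger
  qed
  have cop: "coprime (?t k) (?t (Suc k))" for k using cf_det[of ?a k] by (rule det_coprime)
  have chi: "chi4 (?t k) = (if k \<in> S then -1 else 1)" for k using m4[of k] by (auto simp: chi4_def)
  have D: "jacobi (?t k) (?t (Suc k)) = 1" for k
  proof (induction k)
    case 0 then show ?case by simp
  next
    case (Suc k)
    have "\<not> (Suc k \<in> S \<and> Suc (Suc k) \<in> S)" using okS_consec[OF assms] by blast
    hence sg: "sig (?t (Suc k)) (?t (Suc (Suc k))) = 1" using chi[of "Suc k"] chi[of "Suc (Suc k)"]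
      by (auto simp: sig_def)
    have "[?t (Suc (Suc k)) = ?t k] (mod ?t (Suc k))"
      by (simp add: cong_iff_dvd_diff)
    hence "jacobi (?t (Suc (Suc k))) (?t (Suc k)) = jacobi (?t k) (?t (Suc k))" by (rule jacobi_cong)
    hence j2: "jacobi (?t (Suc (Suc k))) (?t (Suc k)) = 1" using Suc.IH by simp
    have "jacobi (?t (Suc k)) (?t (Suc (Suc k))) * jacobi (?t (Suc (Suc k))) (?t (Suc k)) = 1"
      using jacobi_recip[OF pos[of "Suc k"] odd[of "Suc k"] pos[of "Suc (Suc k)"] odd[of "Suc (Suc k)"] cop[of "Suc k"]] sg
      by simp
    then show ?case using j2 by simp
  qed
  have J: "jacobi (?s k) (?t k) = (if k \<in> S then -1 else 1)"
  proof (cases k)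
    case 0
    have "0 \<notin> S" using okS_0[OF assms] .
    then show ?thesis using 0 by simp
  next
    case (Suc m)
    have "[?s (Suc m) * ?t m = (-1)^m] (mod ?t (Suc m))"
      using cf_det[of ?a m] unfolding cong_iff_dvd_diff
      by (metis add_diff_cancel_left' diff_add_cancel dvd_triv_right mult.commute)
    hence "jacobi (?s (Suc m) * ?t m) (?t (Suc m)) = jacobi ((-1)^m) (?t (Suc m))" by (rule jacobi_cong)
    moreover have "jacobi (?s (Suc m) * ?t m) (?t (Suc m)) = jacobi (?s (Suc m)) (?t (Suc m))"
      using jacobi_mult_num[OF pos odd] D[of m] by simp
    ultimately have E: "jacobi (?s (Suc m)) (?t (Suc m)) = jacobi ((-1)^m) (?t (Suc m))" by simp
    show ?thesis
    proof (cases "even m")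
      case True
      hence "Suc m \<notin> S" using okS_odd[OF assms] by simp
      thus ?thesis using E True Suc by simp
    next
      case False
      hence "(-1::int)^m = -1" by simp
      thus ?thesis using E Suc jacobi_neg1[OF pos odd] chi by simp
    qed
  qed
  show ?thesis using J odd by blast
qed

lemma jacobi_seq_digs:
  assumes "okS S" "cf_digit x = digs S"
  shows "jacobi_seq x k = Some (if k \<in> S then -1 else 1)"
  using jac_digs[OF assms(1), of k] assms(2) by (simp add: jacobi_seq_def Let_def)


fun cv :: "(nat \<Rightarrow> int) \<Rightarrow> nat \<Rightarrow> real \<Rightarrow> real" where
  "cv a 0 z = z"
| "cv a (Suc n) z = a 0 + 1 / cv (\<lambda>i. a (Suc i)) n z"

definition good :: "(nat \<Rightarrow> int) \<Rightarrow> bool" where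
  "good a \<longleftrightarrow> (\<forall>i. 1 \<le> a i \<and> a i \<le> 4)"

lemma good_Suc: "good a \<Longrightarrow> good (\<lambda>i. a (Suc i))"
  by (simp add: good_def)

lemma good_shift: "good a \<Longrightarrow> good (\<lambda>i. a (i + k))"
  by (simp add: good_def)

lemma cv_bounds:
  assumes "good a" "1 \<le> z" "z \<le> 5"
  shows "1 \<le> cv a n z \<and> cv a n z \<le> 5"
  using assms(1)
proof (induction n arbitrary: a)
  case 0 then show ?case using assms by simp
next
  case (Suc n)
  let ?w = "cv (\<lambda>i. a (Suc i)) n z"
  have w: "1 \<le> ?w" "?w \<le> 5" using Suc.IH[OF good_Suc[OF Suc.prems]] by auto
  have a0: "1 \<le> real_of_int (a 0)" "real_of_int (a 0) \<le> 4" using Suc.prems by (auto simp: good_def)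
  have "0 < 1 / ?w" "1 / ?w \<le> 1" using w by auto
  then show ?case using a0 unfolding cv.simps by (intro conjI; linarith)
qed

lemma two_step:
  fixes b p q :: real
  assumes "1 \<le> b" "1 \<le> p" "1 \<le> q"
  shows "\<bar>1 / (b + 1/p) - 1 / (b + 1/q)\<bar> \<le> \<bar>p - q\<bar> / 4"
proof -
  have bp1: "b*p \<ge> 1" using mult_mono[of 1 b 1 p] assms by simp
  have bq1: "b*q \<ge> 1" using mult_mono[of 1 b 1 q] assms by simp
  have bp: "b*p+1 > 0" "b*q+1 > 0" using bp1 bq1 by linarith+
  have p0: "p \<noteq> 0" "q \<noteq> 0" using assms by linarith+
  have e1: "1 / (b + 1/p) = p / (b*p+1)"
  proof -
    have "b + 1/p = (b*p+1) / p" using p0 by (simp add: field_simps)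
    then show ?thesis by simp
  qed
  have e2: "1 / (b + 1/q) = q / (b*q+1)"
  proof -
    have "b + 1/q = (b*q+1) / q" using p0 by (simp add: field_simps)
    then show ?thesis by simp
  qed
  have e3: "p / (b*p+1) - q / (b*q+1) = (p*(b*q+1) - q*(b*p+1)) / ((b*p+1)*(b*q+1))"
    using bp by (simp add: diff_frac_eq)
  have e4: "p*(b*q+1) - q*(b*p+1) = p - q" by (simp add: algebra_simps)
  have e: "1 / (b + 1/p) - 1 / (b + 1/q) = (p - q) / ((b*p+1)*(b*q+1))"
    by (simp only: e1 e2 e3 e4)
  have d: "2 * 2 \<le> (b*p+1)*(b*q+1)"
    by (rule mult_mono) (use bp1 bq1 in linarith)+
  have dpos: "0 < (b*p+1)*(b*q+1)" using d by linarith
  have "\<bar>1 / (b + 1/p) - 1 / (b + 1/q)\<bar> = \<bar>p - q\<bar> / ((b*p+1)*(b*q+1))"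
    unfolding e
    using dpos by (simp only: abs_div_pos)
  also have "\<dots> \<le> \<bar>p - q\<bar> / 4"
    by (rule divide_left_mono) (use d in simp_all)
  finally show ?thesis .
qed

lemma cv_contr:
  assumes "good a" "1 \<le> z" "z \<le> 5" "1 \<le> w" "w \<le> 5"
  shows "\<bar>cv a n z - cv a n w\<bar> \<le> 2 * \<bar>z - w\<bar> / 2^n"
  using assms(1)
proof (induction n arbitrary: a rule: less_induct)
  case (less n)
  consider "n = 0" | "n = 1" | k where "n = Suc (Suc k)"
    by (metis One_nat_def not0_implies_Suc)
  then show ?case
  proof cases
    case 1 then show ?thesis by simp
  next
    case 2
    have e: "cv a n z - cv a n w = 1 / z - 1 / w" using 2 by simp
    have "\<bar>1 / z - 1 / w\<bar> = \<bar>z - w\<bar> / (z*w)" using assms by (simp add: field_simps)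
    also have "\<dots> \<le> \<bar>z - w\<bar> / 1"
      using assms mult_mono[of 1 z 1 w] by (intro divide_left_mono) auto
    also have "\<dots> = 2 * \<bar>z - w\<bar> / 2^n" using 2 by simp
    finally show ?thesis using e by simp
  next
    case 3
    let ?b = "\<lambda>i. a (Suc (Suc i))"
    have gb: "good ?b" using less.prems by (simp add: good_def)
    let ?P = "cv ?b k z" and ?Q = "cv ?b k w"
    have P: "1 \<le> ?P" "1 \<le> ?Q" using cv_bounds[OF gb, of z k] cv_bounds[OF gb, of w k] assms by auto
    have a1: "1 \<le> real_of_int (a 1)" using less.prems by (simp add: good_def)
    have kn: "k < n" using 3 by simp
    have IH: "\<bar>?P - ?Q\<bar> \<le> 2 * \<bar>z - w\<bar> / 2^k"
      using less.IH[OF kn gb] .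
    have ez: "cv a n z = a 0 + 1 / (a 1 + 1/?P)" using 3 by simp
    have ew: "cv a n w = a 0 + 1 / (a 1 + 1/?Q)" using 3 by simp
    have "\<bar>cv a n z - cv a n w\<bar> = \<bar>1 / (a 1 + 1/?P) - 1 / (a 1 + 1/?Q)\<bar>"
      unfolding ez ew by simp
    also have "\<dots> \<le> \<bar>?P - ?Q\<bar> / 4" using two_step[OF a1 P] .
    also have "\<dots> \<le> (2 * \<bar>z - w\<bar> / 2^k) / 4" using IH by (rule divide_right_mono) simp
    also have "\<dots> = 2 * \<bar>z - w\<bar> / 2^n"
    proof -
      have "(2::real)^n = 4 * 2^k" using 3 by simp
      then show ?thesis by simp
    qed
    finally show ?thesis .
  qed
qed

lemma cv_comp: "cv a (n + k) z = cv a n (cv (\<lambda>i. a (i + n)) k z)"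
proof (induction n arbitrary: a)
  case 0 then show ?case by simp
next
  case (Suc n)
  have "cv a (Suc n + k) z = a 0 + 1 / cv (\<lambda>i. a (Suc i)) (n + k) z" by simp
  also have "\<dots> = a 0 + 1 / cv (\<lambda>i. a (Suc i)) n (cv (\<lambda>i. a (Suc (i + n))) k z)"
    using Suc.IH[of "\<lambda>i. a (Suc i)"] by simp
  finally show ?case by simp
qed

definition yv :: "(nat \<Rightarrow> int) \<Rightarrow> real" where
  "yv a = lim (\<lambda>n. cv a n 1)"

lemma cv_cauchy_bound:
  assumes "good a" "n \<le> m"
  shows "\<bar>cv a m 1 - cv a n 1\<bar> \<le> 8 / 2^n"
proof -
  let ?Z = "cv (\<lambda>i. a (i + n)) (m - n) 1"
  have Z: "1 \<le> ?Z" "?Z \<le> 5" using cv_bounds[OF good_shift[OF assms(1), of n], of 1 "m - n"] by auto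
  have "cv a m 1 = cv a n ?Z" using cv_comp[of a n "m - n" 1] assms(2) by simp
  hence "\<bar>cv a m 1 - cv a n 1\<bar> \<le> 2 * \<bar>?Z - 1\<bar> / 2^n"
    using cv_contr[OF assms(1) Z, of 1 n] by simp
  also have "\<dots> \<le> 2 * 4 / 2^n" using Z by (intro divide_right_mono) auto
  finally show ?thesis by simp
qed

lemma cv_conv:
  assumes "good a"
  shows "(\<lambda>n. cv a n 1) \<longlonglongrightarrow> yv a"
proof -
  have "Cauchy (\<lambda>n. cv a n 1)"
  proof (rule CauchyI)
    fix e :: real assume "0 < e"
    obtain M where M: "(1/2::real)^M < e / 8" using real_arch_pow_inv[of "e/8" "1/2"] \<open>0 < e\<close> by auto
    have "8 / 2^M < e" using M by (simp add: power_divide field_simps)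
    show "\<exists>M. \<forall>m\<ge>M. \<forall>n\<ge>M. norm (cv a m 1 - cv a n 1) < e"
    proof (intro exI allI impI)
      fix m n assume "M \<le> m" "M \<le> n"
      have mono: "8 / 2^k \<le> 8 / (2::real)^M" if "M \<le> k" for k
        using that by (intro divide_left_mono) (auto intro: power_increasing)
      show "norm (cv a m 1 - cv a n 1) < e"
      proof (cases "n \<le> m")
        case True
        then show ?thesis using cv_cauchy_bound[OF assms True] mono[OF \<open>M \<le> n\<close>] \<open>8 / 2^M < e\<close> by simp
      next
        case False
        then have "m \<le> n" by simp
        then show ?thesis using cv_cauchy_bound[OF assms \<open>m \<le> n\<close>] mono[OF \<open>M \<le> m\<close>] \<open>8 / 2^M < e\<close>
          by (simp add: abs_minus_commute)
      qed
    qed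
  qed
  then show ?thesis unfolding yv_def by (simp add: Cauchy_convergent_iff convergent_LIMSEQ_iff)
qed

lemma yv_bounds:
  assumes "good a"
  shows "1 \<le> yv a \<and> yv a \<le> 5"
proof -
  have b: "1 \<le> cv a n 1 \<and> cv a n 1 \<le> 5" for n using cv_bounds[OF assms, of 1 n] by simp
  show ?thesis
    using LIMSEQ_le_const[OF cv_conv[OF assms], of 1] LIMSEQ_le_const2[OF cv_conv[OF assms], of 5] b by auto
qed

lemma yv_rec:
  assumes "good a"
  shows "yv a = a 0 + 1 / yv (\<lambda>i. a (Suc i))"
proof -
  have g: "good (\<lambda>i. a (Suc i))" using good_Suc[OF assms] .
  have ne: "yv (\<lambda>i. a (Suc i)) \<noteq> 0" using yv_bounds[OF g] by auto
  have "(\<lambda>n. cv a (Suc n) 1) \<longlonglongrightarrow> yv a" using cv_conv[OF assms] by (rule LIMSEQ_Suc)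
  moreover have "(\<lambda>n. cv a (Suc n) 1) \<longlonglongrightarrow> a 0 + 1 / yv (\<lambda>i. a (Suc i))"
    unfolding cv.simps by (intro tendsto_intros cv_conv[OF g] ne)
  ultimately show ?thesis by (rule LIMSEQ_unique)
qed

lemma yv_gt1:
  assumes "good a"
  shows "yv a > 1"
proof -
  have "yv (\<lambda>i. a (Suc i)) \<le> 5" using yv_bounds[OF good_Suc[OF assms]] by simp
  moreover have "yv (\<lambda>i. a (Suc i)) \<ge> 1" using yv_bounds[OF good_Suc[OF assms]] by simp
  ultimately have "1 / yv (\<lambda>i. a (Suc i)) > 0" by simp
  moreover have "real_of_int (a 0) \<ge> 1" using assms by (simp add: good_def)
  ultimately show ?thesis using yv_rec[OF assms] by linarith
qed

lemma yv_floor: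
  assumes "good a"
  shows "\<lfloor>yv a\<rfloor> = a 0" and "0 < yv a - a 0" and "yv a - a 0 < 1"
proof -
  have g: "good (\<lambda>i. a (Suc i))" using good_Suc[OF assms] .
  have "yv (\<lambda>i. a (Suc i)) > 1" using yv_gt1[OF g] .
  hence f: "0 < 1 / yv (\<lambda>i. a (Suc i))" "1 / yv (\<lambda>i. a (Suc i)) < 1" by auto
  show "0 < yv a - a 0" "yv a - a 0 < 1" using f yv_rec[OF assms] by simp_all
  then show "\<lfloor>yv a\<rfloor> = a 0" by (intro floor_unique) simp_all
qed

lemma cf_rem_yv:
  assumes "good a"
  shows "cf_rem (yv a) k = yv (\<lambda>i. a (i + k))"
proof (induction k)
  case 0 then show ?case by simp
next
  case (Suc k)
  let ?b = "\<lambda>i. a (i + k)"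
  have g: "good ?b" using good_shift[OF assms] .
  have "cf_rem (yv a) (Suc k) = 1 / (yv ?b - of_int \<lfloor>yv ?b\<rfloor>)" using Suc.IH by simp
  also have "\<dots> = 1 / (yv ?b - ?b 0)" using yv_floor(1)[OF g] by simp
  also have "\<dots> = yv (\<lambda>i. ?b (Suc i))" using yv_rec[OF g] yv_bounds[OF good_Suc[OF g]] by simp
  finally show ?case by simp
qed

lemma cf_digit_yv:
  assumes "good a"
  shows "cf_digit (yv a) = a"
proof
  fix k
  have "cf_digit (yv a) k = \<lfloor>yv (\<lambda>i. a (i + k))\<rfloor>" by (simp add: cf_digit_def cf_rem_yv[OF assms])
  also have "\<dots> = a k" using yv_floor(1)[OF good_shift[OF assms, of k]] by simp
  finally show "cf_digit (yv a) k = a k" .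
qed

lemma yv_irrat_aux:
  "\<forall>a p. good a \<longrightarrow> yv a \<noteq> real_of_int p / real q"
proof (induction q rule: less_induct)
  case (less q)
  show ?case
  proof (intro allI impI notI)
    fix a p assume g: "good a" and eq: "yv a = real_of_int p / real q"
    have q0: "q > 0"
    proof (rule ccontr)
      assume "\<not> q > 0" then have "q = 0" by simp
      then show False using eq yv_bounds[OF g] by simp
    qed
    define r where "r = p - a 0 * int q"
    have f: "0 < yv a - a 0" "yv a - a 0 < 1" using yv_floor[OF g] by auto
    have e2: "yv a - a 0 = real_of_int r / real q" using q0 eq by (simp add: r_def field_simps)
    have r0: "r > 0" using f e2 q0 by (simp add: divide_less_0_iff zero_less_divide_iff)
    have rq: "r < int q"
    proof -
      have "real_of_int r / real q < 1" using f e2 by simp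
      then have "real_of_int r < real q" using q0 by (simp add: divide_less_eq)
      then show ?thesis by linarith
    qed
    have "yv (\<lambda>i. a (Suc i)) = 1 / (yv a - a 0)"
      using yv_rec[OF g] yv_bounds[OF good_Suc[OF g]] by simp
    also have "\<dots> = real_of_int (int q) / real (nat r)" using e2 r0 q0 by simp
    finally have "yv (\<lambda>i. a (Suc i)) = real_of_int (int q) / real (nat r)" .
    moreover have "nat r < q" using rq r0 by simp
    ultimately show False using less.IH[of "nat r"] good_Suc[OF g] by blast
  qed
qed

lemma yv_irrat:
  assumes "good a"
  shows "yv a \<notin> \<rat>"
proof
  assume "yv a \<in> \<rat>"
  then obtain i n where "yv a = real_of_int i / real n" unfolding Rats_eq_int_div_nat by auto
  then show False using yv_irrat_aux assms by blast
qed

lemma realize: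
  assumes "good a"
  shows "\<exists>x. x \<notin> \<rat> \<and> cf_digit x = a"
  using yv_irrat[OF assms] cf_digit_yv[OF assms] by blast


lemma good_digs: "good (digs S)"
  by (simp add: good_def digs_def)

lemma dvd_Suc_iff: "(L::nat) \<ge> 1 \<Longrightarrow> (L dvd Suc j) \<longleftrightarrow> j mod L = L - 1"
proof -
  assume L: "L \<ge> 1"
  have lt: "j mod L < L" using L by simp
  have "L dvd Suc j \<longleftrightarrow> Suc j mod L = 0" by (simp add: dvd_eq_mod_eq_0)
  also have "\<dots> \<longleftrightarrow> Suc (j mod L) = L" by (simp add: mod_Suc)
  also have "\<dots> \<longleftrightarrow> j mod L = L - 1" using L by linarith
  finally show ?thesis .
qed

lemma part1:
  assumes "(L::nat) \<ge> 2" "even L"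
  shows "\<exists>x::real. x \<notin> \<rat> \<and> (\<forall>i. cf_digit x i \<in> {1..4}) \<and>
              eventually_periodic (cf_digit x) \<and>
              (\<exists>N. \<forall>j. jacobi_seq x (N + j) =
                        (if j mod L = L - 1 then Some (-1) else Some 1))"
proof -
  define S where "S = {k. 0 < k \<and> L dvd k}"
  have ok: "okS S" unfolding okS_def S_def using assms(2) by (auto elim: dvd_trans[rotated])
  obtain x where x: "x \<notin> \<rat>" "cf_digit x = digs S" using realize[OF good_digs] by blast
  have per: "eventually_periodic (digs S)"
    unfolding eventually_periodic_def
  proof (intro exI conjI allI impI)
    show "L > 0" using assms by simp
    fix k :: nat assume k: "3 \<le> k"
    have a: "(k + L \<in> S) = (k \<in> S)" using k unfolding S_def by auto
    have b: "(k + L - 2 \<in> S) = (k - 2 \<in> S)"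
    proof -
      have e: "k + L - 2 = (k - 2) + L" using k by simp
      have "L dvd (k - 2) + L \<longleftrightarrow> L dvd (k - 2)" by simp
      moreover have "0 < k - 2" "0 < k - 2 + L" using k by simp_all
      ultimately show ?thesis unfolding S_def e by simp
    qed
    show "digs S (k + L) = digs S k" unfolding digs_def using a b k by simp
  qed
  have J: "jacobi_seq x (1 + j) = (if j mod L = L - 1 then Some (-1) else Some 1)" for j
  proof -
    have "jacobi_seq x (1 + j) = Some (if 1 + j \<in> S then -1 else 1)" by (rule jacobi_seq_digs[OF ok x(2)])
    moreover have "(1 + j \<in> S) \<longleftrightarrow> j mod L = L - 1" unfolding S_def using dvd_Suc_iff[of L j] assms by simp
    ultimately show ?thesis by simp
  qed
  show ?thesis
    using x per J digs_range[of S] by metis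
qed

definition SB :: "nat set \<Rightarrow> nat set" where
  "SB B = {k. \<exists>j. k = 2^(j+1) \<and> (even j \<or> j div 2 \<in> B)}"

definition JB :: "nat set \<Rightarrow> nat \<Rightarrow> int option" where
  "JB B = (\<lambda>k. Some (if k \<in> SB B then -1 else 1))"

lemma okS_SB: "okS (SB B)"
  unfolding okS_def SB_def by auto

lemma mem_SB: "2^(j+1) \<in> SB B \<longleftrightarrow> (even j \<or> j div 2 \<in> B)"
proof
  assume "2^(j+1) \<in> SB B"
  then obtain j' where "(2::nat)^(j+1) = 2^(j'+1)" "even j' \<or> j' div 2 \<in> B" unfolding SB_def by auto
  moreover then have "j = j'" by simp
  ultimately show "even j \<or> j div 2 \<in> B" by simp
qed (auto simp: SB_def)

lemma inj_JB: "inj JB"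
proof (rule injI)
  fix B1 B2 :: "nat set" assume h: "JB B1 = JB B2"
  have S: "k \<in> SB B1 \<longleftrightarrow> k \<in> SB B2" for k
  proof -
    have "JB B1 k = JB B2 k" using h by simp
    then show ?thesis unfolding JB_def by (auto split: if_splits)
  qed
  have "\<forall>n. n \<in> B1 \<longleftrightarrow> n \<in> B2"
  proof
    fix n :: nat
    have "n \<in> B1 \<longleftrightarrow> 2^(2*n+1+1) \<in> SB B1" using mem_SB[of "2*n+1" B1] by simp
    also have "\<dots> \<longleftrightarrow> 2^(2*n+1+1) \<in> SB B2" using S by blast
    also have "\<dots> \<longleftrightarrow> n \<in> B2" using mem_SB[of "2*n+1" B2] by simp
    finally show "n \<in> B1 \<longleftrightarrow> n \<in> B2" .
  qed
  then show "B1 = B2" by blast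
qed

lemma odd_dvd_pow2: "odd (d::nat) \<Longrightarrow> d dvd 2^n \<Longrightarrow> d = 1"
proof -
  assume "odd d" "d dvd 2^n"
  have "coprime d (2^n)" using \<open>odd d\<close> by simp
  hence "gcd d (2^n) = 1" by simp
  moreover have "gcd d (2^n) = d" using \<open>d dvd 2^n\<close> by (simp add: gcd_nat.absorb1)
  ultimately show "d = 1" by simp
qed

lemma JB_not_per: "\<not> eventually_periodic (JB B)"
proof
  assume "eventually_periodic (JB B)"
  then obtain N P where P: "P > 0" and per: "\<And>k. k \<ge> N \<Longrightarrow> JB B (k + P) = JB B k"
    unfolding eventually_periodic_def by blast
  define k0 :: nat where "k0 = 2^(2*N+1)"
  have "N < 2^N" by (rule less_exp)
  also have "(2::nat)^N \<le> 2^(2*N+1)" by (intro power_increasing) auto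
  finally have k0N: "N \<le> k0" unfolding k0_def by simp
  have it: "JB B (k0 + i*P) = JB B k0" for i
  proof (induction i)
    case 0 then show ?case by simp
  next
    case (Suc i)
    have "JB B (k0 + Suc i * P) = JB B ((k0 + i*P) + P)" by (simp add: algebra_simps)
    also have "\<dots> = JB B (k0 + i*P)" using per[of "k0 + i*P"] k0N by simp
    finally show ?case using Suc.IH by simp
  qed
  have "k0 \<in> SB B" unfolding k0_def using mem_SB[of "2*N" B] by simp
  hence "JB B k0 = Some (-1)" by (simp add: JB_def)
  hence "JB B (k0 + (2*k0)*P) = Some (-1)" using it[of "2*k0"] by simp
  hence "k0 + (2*k0)*P \<in> SB B" by (auto simp: JB_def split: if_splits)
  then obtain j where j: "k0 + (2*k0)*P = 2^(j+1)" unfolding SB_def by auto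
  have "k0 + (2*k0)*P = k0 * (1 + 2*P)" by (simp add: algebra_simps)
  hence "(1 + 2*P) dvd 2^(j+1)" using j by (metis dvd_triv_right)
  hence "1 + 2*P = 1" by (rule odd_dvd_pow2[rotated]) simp
  then show False using P by simp
qed

lemma JB_real: "\<exists>x::real. x \<notin> \<rat> \<and> (\<forall>i. cf_digit x i \<in> {1..4}) \<and> JB B = jacobi_seq x"
proof -
  obtain x where x: "x \<notin> \<rat>" "cf_digit x = digs (SB B)" using realize[OF good_digs] by blast
  have "JB B = jacobi_seq x"
    by (rule ext) (simp add: JB_def jacobi_seq_digs[OF okS_SB x(2)])
  then show ?thesis using x digs_range by metis
qed

lemma UNIV_nat_set_uncountable: "uncountable (UNIV :: nat set set)"
proof
  assume c: "countable (UNIV :: nat set set)"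
  let ?f = "from_nat_into (UNIV :: nat set set)"
  have r: "range ?f = UNIV"
    by (rule range_from_nat_into[OF _ c]) simp
  have "{a. a \<notin> ?f a} \<in> range ?f" using r by simp
  then obtain a0 where a0: "{a. a \<notin> ?f a} = ?f a0" by blast
  show False
  proof (cases "a0 \<in> ?f a0")
    case True
    then have "a0 \<in> {a. a \<notin> ?f a}" using a0 by simp
    then show False using True by simp
  next
    case False
    then have "a0 \<in> {a. a \<notin> ?f a}" by simp
    then show False using False a0 by simp
  qed
qed

lemma part2:
  "uncountable {J. \<not> eventually_periodic J \<and>
                       (\<exists>x::real. x \<notin> \<rat> \<and> (\<forall>i. cf_digit x i \<in> {1..4}) \<and>
                                J = jacobi_seq x)}" (is "uncountable ?X")
proof
  assume c: "countable ?X"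
  have "range JB \<subseteq> ?X" using JB_not_per JB_real by blast
  hence "countable (range JB)" using c countable_subset by blast
  hence "countable (UNIV :: nat set set)" using inj_JB countable_image_inj_on by blast
  then show False using UNIV_nat_set_uncountable by blast
qed

theorem theorem7:
  shows "(\<forall>L::nat. L \<ge> 2 \<longrightarrow> even L \<longrightarrow>
           (\<exists>x::real. x \<notin> \<rat> \<and> (\<forall>i. cf_digit x i \<in> {1..4}) \<and>
              eventually_periodic (cf_digit x) \<and>
              (\<exists>N. \<forall>j. jacobi_seq x (N + j) =
                        (if j mod L = L - 1 then Some (-1) else Some 1))))
       \<and> uncountable {J. \<not> eventually_periodic J \<and>
                       (\<exists>x::real. x \<notin> \<rat> \<and> (\<forall>i. cf_digit x i \<in> {1..4}) \<and>
                                J = jacobi_seq x)}"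
  using part1 part2 by blast


end
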